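(* For every integer $n \geq 1$, $$\sum_{\pi \vdash n} t(\pi) = \sum_{i \geq 1} S(i)\, p(n-i).$$
   Context: $p(m)$ is the number of partitions of $m$, with $p(0)=1$ and $p(m)=0$ for $m<0$. For a partition $\pi$, $f_i$ denotes the number of times $i$ appears as a part of $\pi$, and $t(\pi)$ is the nonnegative integer such that $f_i$ is odd for all $1 \leq i \leq t(\pi)$ and $f_{t(\pi)+1}$ is even (possibly zero). The rank of a partition is its largest part minus its number of parts. For $i \geq 1$, $S(i)$ is the number of partitions of $i$ into distinct parts with even rank minus the number of partitions of $i$ into distinct parts with odd rank. *)

theory Defs
  imports Main "HOL-Library.Multiset"
begin

definition partitions :: "nat \<Rightarrow> nat multiset set" where
  "partitions m = {P. (\<forall>x\<in>#P. 0 < x) \<and> sum_mset P = m}"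

definition npart :: "int \<Rightarrow> int" where
  "npart m = (if m < 0 then 0 else int (card (partitions (nat m))))"

text \<open>t(P): least t with f_{t+1} even; then f_i is odd for all 1 <= i <= t.\<close>
definition tstat :: "nat multiset \<Rightarrow> nat" where
  "tstat P = (LEAST t. even (count P (t + 1)))"

definition prank :: "nat multiset \<Rightarrow> int" where
  "prank P = int (Max (set_mset P)) - int (size P)"

definition distinct_partitions :: "nat \<Rightarrow> nat multiset set" where
  "distinct_partitions m = {P \<in> partitions m. \<forall>x. count P x \<le> 1}"

definition S :: "nat \<Rightarrow> int" where
  "S i = int (card {P \<in> distinct_partitions i. even (prank P)})
       - int (card {P \<in> distinct_partitions i. odd (prank P)})"

end

theory Submission
  imports Defs "HOL-Computational_Algebra.Formal_Power_Series"
begin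
unbundle fps_syntax


definition F :: "nat \<Rightarrow> (nat \<Rightarrow> int) \<Rightarrow> int fps" where
  "F j u = Abs_fps (\<lambda>t. if j dvd t then u (t div j) else 0)"

definition Ef :: "nat \<Rightarrow> int fps" where "Ef j = F j (\<lambda>_. 1)"
definition Of :: "nat \<Rightarrow> int fps" where "Of j = F j (\<lambda>c. if odd c then 1 else 0)"

lemma Ef_eq: assumes "j \<ge> 1" shows "Ef j * (1 - fps_X ^ j) = 1"
proof (rule fps_ext)
  fix m
  show "(Ef j * (1 - fps_X ^ j)) $ m = 1 $ m"
  proof (cases "m < j")
    case True
    then have "j dvd m \<longleftrightarrow> m = 0" using assms by (auto dest: dvd_imp_le)
    then show ?thesis using True
      by (simp add: algebra_simps fps_X_power_mult_right_nth fps_X_power_mult_nth Ef_def F_def)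
  next
    case False
    then have "j dvd m \<longleftrightarrow> j dvd (m - j)" using assms
      by (metis dvd_minus_self le_add_diff_inverse not_le)
    then show ?thesis using False assms
      by (simp add: algebra_simps fps_X_power_mult_right_nth fps_X_power_mult_nth Ef_def F_def)
  qed
qed

lemma Of_eq: assumes "j \<ge> 1" shows "Of j * (1 - fps_X ^ (2*j)) = fps_X ^ j"
proof (rule fps_ext)
  fix m
  show "(Of j * (1 - fps_X ^ (2*j))) $ m = (fps_X ^ j) $ m"
  proof (cases "m < 2*j")
    case True
    then have "(j dvd m \<and> odd (m div j)) \<longleftrightarrow> m = j" using assms
      by (auto elim!: dvdE simp: less_2_cases_iff)
    then show ?thesis using True
      by (auto simp add: algebra_simps fps_X_power_mult_right_nth fps_X_power_mult_nth Of_def F_def)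
  next
    case False
    then obtain r where r: "m = r + 2*j" by (metis add.commute le_add_diff_inverse not_le)
    have d: "j dvd m \<longleftrightarrow> j dvd r" using r by (simp add: dvd_add_left_iff)
    have "j dvd r \<Longrightarrow> m div j = r div j + 2" using r assms by auto
    then have "(j dvd m \<and> odd (m div j)) \<longleftrightarrow> (j dvd r \<and> odd (r div j))" using d by auto
    moreover have "m \<noteq> j" using False assms by auto
    ultimately show ?thesis using False r
      by (auto simp add: algebra_simps fps_X_power_mult_right_nth fps_X_power_mult_nth Of_def F_def)
  qed
qed


definition Om :: "nat \<Rightarrow> nat \<Rightarrow> int fps" where
  "Om N k = (\<Prod>j\<in>{1..N}. if j \<le> k then Of j else Ef j)"
definition Pf :: "nat \<Rightarrow> int fps" where
  "Pf N = (\<Prod>j\<in>{1..N}. Ef j)"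

lemma one_minus_Xp_nz: "k \<ge> 1 \<Longrightarrow> (1 - fps_X ^ k :: int fps) \<noteq> 0"
proof
  assume "k \<ge> 1" "(1 - fps_X ^ k :: int fps) = 0"
  then have "(1 - fps_X ^ k :: int fps) $ 0 = 0" by simp
  with \<open>k \<ge> 1\<close> show False by simp
qed

lemma one_plus_Xp_nz: "k \<ge> 1 \<Longrightarrow> (1 + fps_X ^ k :: int fps) \<noteq> 0"
proof
  assume "k \<ge> 1" "(1 + fps_X ^ k :: int fps) = 0"
  then have "(1 + fps_X ^ k :: int fps) $ 0 = 0" by simp
  with \<open>k \<ge> 1\<close> show False by simp
qed

lemma Om_step:
  assumes k: "1 \<le> k" "k \<le> N"
  shows "Om N k * (1 + fps_X ^ k) = fps_X ^ k * Om N (k - 1)"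
proof -
  define R where "R = (\<Prod>j\<in>{1..N} - {k}. if j \<le> k then Of j else Ef j)"
  have kin: "k \<in> {1..N}" using k by auto
  have R2: "R = (\<Prod>j\<in>{1..N} - {k}. if j \<le> k - 1 then Of j else Ef j)"
    unfolding R_def by (rule prod.cong) auto
  have o1: "Om N k = Of k * R" unfolding Om_def R_def
    using prod.remove[OF _ kin, of "\<lambda>j. if j \<le> k then Of j else Ef j"] by simp
  have o2: "Om N (k - 1) = Ef k * R" unfolding Om_def R2
    using prod.remove[OF _ kin, of "\<lambda>j. if j \<le> k - 1 then Of j else Ef j"] k by auto
  have sq: "(1 + fps_X ^ k) * (1 - fps_X ^ k) = (1 - fps_X ^ (2*k) :: int fps)"
    by (simp add: algebra_simps power_mult[symmetric] mult.commute[of 2] power2_eq_square power_add[symmetric] mult_2)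
  have "(1 - fps_X ^ k) * (Om N k * (1 + fps_X ^ k)) = R * (Of k * (1 - fps_X ^ (2*k)))"
    unfolding o1 sq[symmetric] by (simp add: algebra_simps)
  also have "\<dots> = R * fps_X ^ k" using Of_eq k by simp
  also have "\<dots> = (1 - fps_X ^ k) * (fps_X ^ k * Om N (k - 1))"
  proof -
    have "(1 - fps_X ^ k) * (fps_X ^ k * Om N (k - 1)) = fps_X ^ k * R * (Ef k * (1 - fps_X ^ k))"
      unfolding o2 by (simp add: ac_simps)
    also have "\<dots> = R * fps_X ^ k" using Ef_eq[of k] k by (simp add: ac_simps)
    finally show ?thesis by simp
  qed
  finally show ?thesis using one_minus_Xp_nz[OF k(1)] by simp
qed

lemma D_Pf:
  fixes D :: "nat \<Rightarrow> int fps"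
  assumes D0: "D 0 = 1" and Ds: "\<And>k. k \<ge> 1 \<Longrightarrow> D k * (1 + fps_X ^ k) = fps_X ^ k * D (k - 1)"
  shows "k \<le> N \<Longrightarrow> D k * Pf N = Om N k"
proof (induction k)
  case 0
  then show ?case by (simp add: D0 Pf_def Om_def)
next
  case (Suc k)
  have "(D (Suc k) * Pf N) * (1 + fps_X ^ Suc k) = fps_X ^ Suc k * (D k * Pf N)"
  proof -
    have "(D (Suc k) * Pf N) * (1 + fps_X ^ Suc k) = Pf N * (D (Suc k) * (1 + fps_X ^ Suc k))"
      by (simp add: ac_simps)
    also have "\<dots> = Pf N * (fps_X ^ Suc k * D k)" using Ds[of "Suc k"] by simp
    finally show ?thesis by (simp add: ac_simps)
  qed
  also have "\<dots> = fps_X ^ Suc k * Om N k" using Suc by simp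
  also have "\<dots> = Om N (Suc k) * (1 + fps_X ^ Suc k)" using Om_step[of "Suc k" N] Suc by simp
  finally show ?case using one_plus_Xp_nz[of "Suc k"] by simp
qed


lemma size_le_sum_pos: "(\<forall>x\<in>#P. 0 < x) \<Longrightarrow> size P \<le> sum_mset (P::nat multiset)"
proof (induction P)
  case empty then show ?case by simp
next
  case (add x P) then show ?case by auto
qed

lemma finite_partitions: "finite (partitions m)"
proof -
  have "partitions m \<subseteq> mset ` {xs. set xs \<subseteq> {..m} \<and> length xs \<le> m}"
  proof
    fix P assume P: "P \<in> partitions m"
    obtain xs where xs: "mset xs = P" using ex_mset by blast
    have "\<forall>x\<in>#P. x \<le> m" using P unfolding partitions_def
      by (auto dest!: multi_member_split)
    moreover have "size P \<le> m" using P size_le_sum_pos unfolding partitions_def by auto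
    ultimately show "P \<in> mset ` {xs. set xs \<subseteq> {..m} \<and> length xs \<le> m}"
      using xs by (auto intro!: image_eqI[of _ _ xs])
  qed
  moreover have "finite {xs. set xs \<subseteq> {..m} \<and> length xs \<le> m}"
    by (rule finite_lists_length_le) simp
  ultimately show ?thesis by (meson finite_imageI finite_subset)
qed

lemma part_le: "P \<in> partitions m \<Longrightarrow> x \<in># P \<Longrightarrow> x \<le> m"
  unfolding partitions_def by (auto dest!: multi_member_split)

definition PN :: "nat \<Rightarrow> nat \<Rightarrow> nat multiset set" where
  "PN N m = {P \<in> partitions m. \<forall>x\<in>#P. x \<le> N}"

definition G :: "nat \<Rightarrow> (nat \<Rightarrow> nat \<Rightarrow> int) \<Rightarrow> int fps" where
  "G N w = (\<Prod>j\<in>{1..N}. F j (w j))"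

lemma finite_PN: "finite (PN N m)"
  unfolding PN_def using finite_partitions by simp

lemma PN_fiber:
  assumes cm: "Suc N * c \<le> m"
  shows "{P \<in> PN (Suc N) m. count P (Suc N) = c}
       = (\<lambda>Q. Q + replicate_mset c (Suc N)) ` PN N (m - Suc N * c)"
proof
  show "{P \<in> PN (Suc N) m. count P (Suc N) = c}
       \<subseteq> (\<lambda>Q. Q + replicate_mset c (Suc N)) ` PN N (m - Suc N * c)"
  proof
    fix P assume "P \<in> {P \<in> PN (Suc N) m. count P (Suc N) = c}"
    then have P: "P \<in> PN (Suc N) m" and c: "count P (Suc N) = c" by auto
    define Q where "Q = filter_mset (\<lambda>x. x \<le> N) P"
    have PQ: "P = Q + replicate_mset c (Suc N)"
    proof (rule multiset_eqI)
      fix x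
      show "count P x = count (Q + replicate_mset c (Suc N)) x"
      proof (cases "x \<le> N")
        case True then show ?thesis by (simp add: Q_def)
      next
        case False
        show ?thesis
        proof (cases "x = Suc N")
          case True then show ?thesis using c by (simp add: Q_def)
        next
          case False2: False
          then have "x \<notin># P" using P False unfolding PN_def by auto
          then show ?thesis using False False2 by (simp add: Q_def not_in_iff)
        qed
      qed
    qed
    have "sum_mset P = sum_mset Q + c * Suc N" using PQ by simp
    then have "Q \<in> PN N (m - Suc N * c)" using P unfolding PN_def partitions_def Q_def
      by (auto simp: algebra_simps)
    then show "P \<in> (\<lambda>Q. Q + replicate_mset c (Suc N)) ` PN N (m - Suc N * c)"
      using PQ by blast
  qed
next
  show "(\<lambda>Q. Q + replicate_mset c (Suc N)) ` PN N (m - Suc N * c)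
      \<subseteq> {P \<in> PN (Suc N) m. count P (Suc N) = c}"
  proof
    fix P assume "P \<in> (\<lambda>Q. Q + replicate_mset c (Suc N)) ` PN N (m - Suc N * c)"
    then obtain Q where Q: "Q \<in> PN N (m - Suc N * c)" and P: "P = Q + replicate_mset c (Suc N)"
      by auto
    have cQ: "count Q (Suc N) = 0" using Q unfolding PN_def by (auto simp: not_in_iff[symmetric])
    have "sum_mset Q = m - Suc N * c" using Q unfolding PN_def partitions_def by auto
    then have "sum_mset P = m" using P cm by simp
    moreover have "\<forall>x\<in>#P. 0 < x \<and> x \<le> Suc N" using Q P unfolding PN_def partitions_def
      by (auto split: if_splits)
    moreover have "count P (Suc N) = c" using P cQ by simp
    ultimately show "P \<in> {P \<in> PN (Suc N) m. count P (Suc N) = c}"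
      unfolding PN_def partitions_def by auto
  qed
qed


lemma mset_all_zero: "\<forall>x\<in>#P. 0 < x \<Longrightarrow> \<forall>x\<in>#P. x \<le> (0::nat) \<Longrightarrow> P = {#}"
  by (cases "P = {#}") (auto elim!: multiset_nonemptyE dest!: bspec)

lemma PN_0: "PN 0 m = (if m = 0 then {{#}} else {})"
proof -
  have "P \<in> PN 0 m \<longleftrightarrow> P = {#} \<and> m = 0" for P
  proof
    assume h: "P \<in> PN 0 m"
    then have "P = {#}" by (intro mset_all_zero) (auto simp: PN_def partitions_def)
    with h show "P = {#} \<and> m = 0" by (simp add: PN_def partitions_def)
  qed (auto simp: PN_def partitions_def)
  then show ?thesis by auto
qed

lemma count_le_m: "P \<in> PN N m \<Longrightarrow> count P x \<le> m"
proof -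
  assume "P \<in> PN N m"
  then have "size P \<le> m" using size_le_sum_pos unfolding PN_def partitions_def by auto
  moreover have "count P x \<le> size P" by (rule count_le_size)
  ultimately show ?thesis by simp
qed

lemma G_nth: "G N w $ m = (\<Sum>P\<in>PN N m. \<Prod>j\<in>{1..N}. w j (count P j))"
proof (induction N arbitrary: m)
  case 0
  then show ?case by (simp add: G_def PN_0)
next
  case (Suc N)
  define a where "a = Suc N"
  define W where "W = (\<lambda>m. \<Sum>P\<in>PN N m. \<Prod>j\<in>{1..N}. w j (count P j))"
  define C where "C = {c. c \<le> m \<and> a * c \<le> m}"
  have a1: "a \<ge> 1" by (simp add: a_def)
  have "G (Suc N) w = F a (w a) * G N w"
    unfolding G_def a_def by (simp add: atLeastAtMostSuc_conv)
  then have "G (Suc N) w $ m = (\<Sum>i=0..m. F a (w a) $ i * W (m - i))"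
    by (simp add: fps_mult_nth Suc W_def)
  also have "\<dots> = (\<Sum>i\<in>{0..m}. if a dvd i then w a (i div a) * W (m - i) else 0)"
    by (rule sum.cong) (auto simp: F_def)
  also have "\<dots> = (\<Sum>i\<in>(\<lambda>c. a * c) ` C. if a dvd i then w a (i div a) * W (m - i) else 0)"
  proof (rule sum.mono_neutral_right)
    show "(\<lambda>c. a * c) ` C \<subseteq> {0..m}" unfolding C_def by auto
    show "\<forall>i\<in>{0..m} - (\<lambda>c. a * c) ` C. (if a dvd i then w a (i div a) * W (m - i) else 0) = 0"
    proof
      fix i assume i: "i \<in> {0..m} - (\<lambda>c. a * c) ` C"
      show "(if a dvd i then w a (i div a) * W (m - i) else 0) = 0"
      proof (cases "a dvd i")
        case True
        then obtain c where "i = a * c" by blast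
        moreover have "c \<le> i" using a1 \<open>i = a * c\<close> by simp
        moreover have "c \<le> m" using \<open>c \<le> i\<close> i by auto
        ultimately have "i \<in> (\<lambda>c. a * c) ` C" using i unfolding C_def
          by (intro image_eqI[of _ _ c]) auto
        then show ?thesis using i by simp
      qed simp
    qed
  qed simp
  also have "\<dots> = (\<Sum>c\<in>C. w a c * W (m - a * c))"
    by (subst sum.reindex) (use a1 in \<open>auto simp: inj_on_def\<close>)
  also have "\<dots> = (\<Sum>c\<in>{0..m}. if a * c \<le> m then w a c * W (m - a * c) else 0)"
    unfolding C_def by (subst sum.inter_filter[symmetric]) (auto intro!: sum.cong)
  also have "\<dots> = (\<Sum>c\<in>{0..m}. \<Sum>P\<in>{P \<in> PN a m. count P a = c}. \<Prod>j\<in>{1..a}. w j (count P j))"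
  proof (rule sum.cong[OF refl])
    fix c assume "c \<in> {0..m}"
    show "(if a * c \<le> m then w a c * W (m - a * c) else 0) =
        (\<Sum>P\<in>{P \<in> PN a m. count P a = c}. \<Prod>j\<in>{1..a}. w j (count P j))"
    proof (cases "a * c \<le> m")
      case False
      have emp: "{P \<in> PN a m. count P a = c} = {}"
      proof (rule ccontr)
        assume "{P \<in> PN a m. count P a = c} \<noteq> {}"
        then obtain P where P: "P \<in> PN a m" "count P a = c" by auto
        have "sum_mset (replicate_mset c a) \<le> sum_mset P"
          using P(2) by (metis count_le_replicate_mset_subset_eq order_refl subset_mset.le_iff_add sum_mset.union le_add1)
        then have "c * a \<le> m" using P unfolding PN_def partitions_def by simp
        then show False using False by (simp add: mult.commute)
      qed
      show ?thesis using False by (simp only: emp sum.empty if_False)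
    next
      case True
      have fib: "{P \<in> PN a m. count P a = c} = (\<lambda>Q. Q + replicate_mset c a) ` PN N (m - a * c)"
        unfolding a_def by (rule PN_fiber) (use True in \<open>simp add: a_def\<close>)
      have inj: "inj_on (\<lambda>Q. Q + replicate_mset c a) (PN N (m - a * c))"
        by (auto simp: inj_on_def)
      have "(\<Sum>P\<in>{P \<in> PN a m. count P a = c}. \<Prod>j\<in>{1..a}. w j (count P j))
          = (\<Sum>Q\<in>PN N (m - a * c). \<Prod>j\<in>{1..a}. w j (count (Q + replicate_mset c a) j))"
        unfolding fib by (subst sum.reindex[OF inj]) simp
      also have "\<dots> = (\<Sum>Q\<in>PN N (m - a * c). w a c * (\<Prod>j\<in>{1..N}. w j (count Q j)))"
      proof (rule sum.cong[OF refl])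
        fix Q assume Q: "Q \<in> PN N (m - a * c)"
        have cQ: "count Q a = 0" using Q unfolding PN_def a_def by (auto simp: not_in_iff[symmetric])
        have "(\<Prod>j\<in>{1..a}. w j (count (Q + replicate_mset c a) j))
            = w a (count (Q + replicate_mset c a) a) * (\<Prod>j\<in>{1..N}. w j (count (Q + replicate_mset c a) j))"
          unfolding a_def by (simp add: atLeastAtMostSuc_conv)
        also have "\<dots> = w a c * (\<Prod>j\<in>{1..N}. w j (count Q j))"
          using cQ by (auto simp: a_def intro!: prod.cong)
        finally show "(\<Prod>j\<in>{1..a}. w j (count (Q + replicate_mset c a) j)) = w a c * (\<Prod>j\<in>{1..N}. w j (count Q j))" .
      qed
      also have "\<dots> = w a c * W (m - a * c)" unfolding W_def by (simp add: sum_distrib_left)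
      finally show ?thesis using True by simp
    qed
  qed
  also have "\<dots> = (\<Sum>P\<in>PN a m. \<Prod>j\<in>{1..a}. w j (count P j))"
    by (rule sum.group) (auto simp: finite_PN count_le_m)
  finally show ?case unfolding a_def .
qed


definition DS :: "nat \<Rightarrow> nat \<Rightarrow> nat set set" where
  "DS k i = {A. finite A \<and> 0 \<notin> A \<and> card A = k \<and> \<Sum>A = i}"

definition sg :: "nat set \<Rightarrow> int" where
  "sg A = (if A = {} then 1 else if even (Max A + card A) then 1 else -1)"

definition Dk :: "nat \<Rightarrow> nat \<Rightarrow> int" where
  "Dk k i = (\<Sum>A\<in>DS k i. sg A)"

lemma elem_le_sum: "finite A \<Longrightarrow> x \<in> A \<Longrightarrow> x \<le> \<Sum>A" for A :: "nat set"
  using sum.remove[of A x "\<lambda>x. x"] by simp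

lemma card_le_sum: "finite A \<Longrightarrow> 0 \<notin> A \<Longrightarrow> card A \<le> \<Sum>A" for A :: "nat set"
proof -
  assume "finite A" "0 \<notin> A"
  then have "(\<Sum>x\<in>A. 1::nat) \<le> (\<Sum>x\<in>A. x)" by (intro sum_mono) (metis less_one not_le)
  then show ?thesis by simp
qed

lemma finite_DS: "finite (DS k i)"
proof -
  have "DS k i \<subseteq> Pow {..i}" unfolding DS_def using elem_le_sum by auto
  then show ?thesis by (rule finite_subset) simp
qed

lemma DS_0: "DS 0 i = (if i = 0 then {{}} else {})"
  unfolding DS_def by auto

lemma DS_small: "k > i \<Longrightarrow> DS k i = {}"
  unfolding DS_def using card_le_sum by fastforce

lemma sum_Suc_img: "finite B \<Longrightarrow> \<Sum>(Suc ` B) = \<Sum>B + card B"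
proof -
  assume "finite B"
  have "\<Sum>(Suc ` B) = sum Suc B" by (simp add: sum.reindex)
  also have "\<dots> = \<Sum>B + card B" using \<open>finite B\<close> by (induction B rule: finite_induct) auto
  finally show ?thesis .
qed

lemma Max_Suc_img: "finite B \<Longrightarrow> B \<noteq> {} \<Longrightarrow> Max (Suc ` B) = Suc (Max B)"
  by (simp add: mono_Max_commute[symmetric] mono_Suc)

lemma sg_Suc: "finite B \<Longrightarrow> B \<noteq> {} \<Longrightarrow> sg (Suc ` B) = - sg B"
  by (simp add: sg_def Max_Suc_img card_image)

lemma sg_ins: "finite B \<Longrightarrow> 0 \<notin> B \<Longrightarrow> sg (insert 1 (Suc ` B)) = sg B"
proof (cases "B = {}")
  case True then show ?thesis by (simp add: sg_def)
next
  case False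
  assume fB: "finite B" "0 \<notin> B"
  have n1: "1 \<notin> Suc ` B" using fB by auto
  have "Max (insert 1 (Suc ` B)) = Suc (Max B)"
    using False fB by (simp add: Max_Suc_img)
  moreover have "card (insert 1 (Suc ` B)) = Suc (card B)" using n1 fB by (simp add: card_image)
  ultimately show ?thesis using False by (simp add: sg_def)
qed

lemma Dk_rec:
  assumes k: "k \<ge> 1" and ik: "i \<ge> k"
  shows "Dk k i = - Dk k (i - k) + Dk (k - 1) (i - k)"
proof -
  have split: "DS k i = {A\<in>DS k i. 1 \<notin> A} \<union> {A\<in>DS k i. 1 \<in> A}" by auto
  have img1: "{A\<in>DS k i. 1 \<notin> A} = (\<lambda>B. Suc ` B) ` DS k (i - k)"
  proof
    show "{A\<in>DS k i. 1 \<notin> A} \<subseteq> (\<lambda>B. Suc ` B) ` DS k (i - k)"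
    proof
      fix A assume A: "A \<in> {A\<in>DS k i. 1 \<notin> A}"
      define B where "B = (\<lambda>x. x - 1) ` A"
      have "Suc ` B = (\<lambda>x. Suc (x - 1)) ` A" unfolding B_def by (simp add: image_image)
      also have "\<dots> = (\<lambda>x. x) ` A"
      proof (rule image_cong[OF refl])
        fix x assume "x \<in> A"
        moreover have "0 \<notin> A" using A by (simp add: DS_def)
        ultimately have "x \<noteq> 0" by metis
        then show "Suc (x - 1) = x" by simp
      qed
      finally have AB: "A = Suc ` B" by simp
      have fB: "finite B" unfolding B_def using A DS_def by auto
      have "card B = k" using AB A unfolding DS_def by (simp add: card_image)
      moreover have "\<Sum>B = i - k" using AB A fB \<open>card B = k\<close> unfolding DS_def by (auto simp: sum_Suc_img)
      moreover have "0 \<notin> B" using AB A unfolding DS_def by auto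
      ultimately have "B \<in> DS k (i - k)" using fB unfolding DS_def by auto
      then show "A \<in> (\<lambda>B. Suc ` B) ` DS k (i - k)" using AB by blast
    qed
  next
    show "(\<lambda>B. Suc ` B) ` DS k (i - k) \<subseteq> {A\<in>DS k i. 1 \<notin> A}"
      using ik by (auto simp: DS_def sum_Suc_img card_image)
  qed
  have img2: "{A\<in>DS k i. 1 \<in> A} = (\<lambda>B. insert 1 (Suc ` B)) ` DS (k - 1) (i - k)"
  proof
    show "{A\<in>DS k i. 1 \<in> A} \<subseteq> (\<lambda>B. insert 1 (Suc ` B)) ` DS (k - 1) (i - k)"
    proof
      fix A assume A: "A \<in> {A\<in>DS k i. 1 \<in> A}"
      define B where "B = (\<lambda>x. x - 1) ` (A - {1})"
      have "Suc ` B = (\<lambda>x. Suc (x - 1)) ` (A - {1})" unfolding B_def by (simp add: image_image)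
      also have "\<dots> = (\<lambda>x. x) ` (A - {1})"
      proof (rule image_cong[OF refl])
        fix x assume "x \<in> A - {1}"
        moreover have "0 \<notin> A" using A by (simp add: DS_def)
        ultimately have "x \<noteq> 0" using DiffD1 by metis
        then show "Suc (x - 1) = x" by simp
      qed
      finally have SB: "Suc ` B = A - {1}" by simp
      then have AB: "A = insert 1 (Suc ` B)" using A by auto
      have fB: "finite B" unfolding B_def using A DS_def by auto
      have n1: "1 \<notin> Suc ` B" using SB by simp
      have "card B = k - 1" using AB A n1 fB unfolding DS_def by (auto simp: card_image)
      moreover have "\<Sum>B = i - k" using AB A fB n1 \<open>card B = k - 1\<close> k unfolding DS_def by (auto simp: sum_Suc_img)
      moreover have "0 \<notin> B" using AB A n1 unfolding DS_def by auto
      ultimately have "B \<in> DS (k - 1) (i - k)" using fB unfolding DS_def by auto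
      then show "A \<in> (\<lambda>B. insert 1 (Suc ` B)) ` DS (k - 1) (i - k)" using AB by blast
    qed
  next
    show "(\<lambda>B. insert 1 (Suc ` B)) ` DS (k - 1) (i - k) \<subseteq> {A\<in>DS k i. 1 \<in> A}"
    proof
      fix A assume "A \<in> (\<lambda>B. insert 1 (Suc ` B)) ` DS (k - 1) (i - k)"
      then obtain B where B: "B \<in> DS (k - 1) (i - k)" and AB: "A = insert 1 (Suc ` B)" by auto
      have n1: "1 \<notin> Suc ` B" using B unfolding DS_def by auto
      show "A \<in> {A\<in>DS k i. 1 \<in> A}" using B AB n1 k ik unfolding DS_def
        by (auto simp: sum_Suc_img card_image)
    qed
  qed
  have inj1: "inj_on (\<lambda>B. Suc ` B) (DS k (i - k))"
    by (auto simp: inj_on_def inj_image_eq_iff)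
  have inj2: "inj_on (\<lambda>B. insert 1 (Suc ` B)) (DS (k - 1) (i - k))"
  proof (rule inj_onI)
    fix B C assume "B \<in> DS (k - 1) (i - k)" "C \<in> DS (k - 1) (i - k)"
      and eq: "insert 1 (Suc ` B) = insert 1 (Suc ` C)"
    then have "1 \<notin> Suc ` B" "1 \<notin> Suc ` C" unfolding DS_def by auto
    then have "Suc ` B = Suc ` C" using eq by (metis insert_ident)
    then show "B = C" by (simp add: inj_image_eq_iff)
  qed
  have "Dk k i = (\<Sum>A\<in>{A\<in>DS k i. 1 \<notin> A}. sg A) + (\<Sum>A\<in>{A\<in>DS k i. 1 \<in> A}. sg A)"
    unfolding Dk_def by (subst split) (rule sum.union_disjoint, auto intro: finite_subset[OF _ finite_DS])
  also have "(\<Sum>A\<in>{A\<in>DS k i. 1 \<notin> A}. sg A) = (\<Sum>B\<in>DS k (i - k). sg (Suc ` B))"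
    unfolding img1 by (rule sum.reindex[OF inj1, unfolded comp_def])
  also have "\<dots> = (\<Sum>B\<in>DS k (i - k). - sg B)"
    by (rule sum.cong[OF refl]) (use k in \<open>auto simp: DS_def intro!: sg_Suc\<close>)
  also have "(\<Sum>A\<in>{A\<in>DS k i. 1 \<in> A}. sg A) = (\<Sum>B\<in>DS (k - 1) (i - k). sg (insert 1 (Suc ` B)))"
    unfolding img2 by (rule sum.reindex[OF inj2, unfolded comp_def])
  also have "\<dots> = (\<Sum>B\<in>DS (k - 1) (i - k). sg B)"
    by (rule sum.cong[OF refl], rule sg_ins) (auto simp: DS_def)
  finally show ?thesis by (simp add: Dk_def sum_negf)
qed

definition Df :: "nat \<Rightarrow> int fps" where "Df k = Abs_fps (Dk k)"

lemma Df_0: "Df 0 = 1"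
  by (rule fps_ext) (simp add: Df_def Dk_def DS_0 sg_def)

lemma Df_step: "k \<ge> 1 \<Longrightarrow> Df k * (1 + fps_X ^ k) = fps_X ^ k * Df (k - 1)"
proof (rule fps_ext)
  fix m assume k: "k \<ge> 1"
  show "(Df k * (1 + fps_X ^ k)) $ m = (fps_X ^ k * Df (k - 1)) $ m"
  proof (cases "m < k")
    case True
    then show ?thesis by (simp add: algebra_simps fps_X_power_mult_nth fps_X_power_mult_right_nth Df_def Dk_def DS_small)
  next
    case False
    then show ?thesis using Dk_rec[OF k, of m]
      by (simp add: algebra_simps fps_X_power_mult_nth fps_X_power_mult_right_nth Df_def)
  qed
qed


definition wk :: "nat \<Rightarrow> nat \<Rightarrow> nat \<Rightarrow> int" where
  "wk k j = (if j \<le> k then (\<lambda>c. if odd c then 1 else 0) else (\<lambda>_. 1))"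

lemma Om_G: "Om N k = G N (wk k)"
  unfolding Om_def G_def by (rule prod.cong) (auto simp: wk_def Of_def Ef_def)

lemma Pf_G: "Pf N = G N (\<lambda>_ _. 1)"
  unfolding Pf_def G_def Ef_def by simp

lemma PN_all: "m \<le> N \<Longrightarrow> PN N m = partitions m"
  unfolding PN_def using part_le by fastforce

lemma Pf_nth: "m \<le> N \<Longrightarrow> Pf N $ m = int (card (partitions m))"
  unfolding Pf_G G_nth by (simp add: PN_all)

lemma prod_ind: "finite A \<Longrightarrow> (\<Prod>j\<in>A. if Q j then 1 else 0 :: int) = (if \<forall>j\<in>A. Q j then 1 else 0)"
  by (induction A rule: finite_induct) auto

lemma tstat_ge:
  assumes P: "P \<in> partitions n"
  shows "k \<le> tstat P \<longleftrightarrow> (\<forall>j\<in>{1..k}. odd (count P j))"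
proof
  assume "k \<le> tstat P"
  show "\<forall>j\<in>{1..k}. odd (count P j)"
  proof
    fix j assume j: "j \<in> {1..k}"
    then have "j - 1 < tstat P" using \<open>k \<le> tstat P\<close> by auto
    then have "\<not> even (count P (j - 1 + 1))" unfolding tstat_def by (rule not_less_Least)
    then show "odd (count P j)" using j by simp
  qed
next
  assume H: "\<forall>j\<in>{1..k}. odd (count P j)"
  have ex: "even (count P (n + 1))"
  proof -
    have "n + 1 \<notin># P" using part_le[OF P] by fastforce
    then show ?thesis by (simp add: not_in_iff)
  qed
  show "k \<le> tstat P"
  proof (rule ccontr)
    assume "\<not> k \<le> tstat P"
    moreover have "even (count P (tstat P + 1))" unfolding tstat_def by (rule LeastI[of _ n], rule ex)
    ultimately show False using H by auto
  qed
qed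

lemma tstat_le:
  assumes P: "P \<in> partitions n"
  shows "tstat P \<le> n"
proof -
  have "n + 1 \<notin># P" using part_le[OF P] by fastforce
  then have "even (count P (n + 1))" by (simp add: not_in_iff)
  then show ?thesis unfolding tstat_def by (rule Least_le)
qed

lemma Om_nth:
  assumes "k \<le> n"
  shows "Om n k $ n = int (card {P \<in> partitions n. k \<le> tstat P})"
proof -
  have "Om n k $ n = (\<Sum>P\<in>partitions n. \<Prod>j\<in>{1..n}. wk k j (count P j))"
    unfolding Om_G G_nth by (simp add: PN_all)
  also have "\<dots> = (\<Sum>P\<in>partitions n. if k \<le> tstat P then 1 else 0)"
  proof (rule sum.cong[OF refl])
    fix P assume P: "P \<in> partitions n"
    have "(\<Prod>j\<in>{1..n}. wk k j (count P j)) = (\<Prod>j\<in>{1..n}. if (j \<le> k \<longrightarrow> odd (count P j)) then 1 else 0)"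
      by (rule prod.cong) (auto simp: wk_def)
    also have "\<dots> = (if \<forall>j\<in>{1..n}. j \<le> k \<longrightarrow> odd (count P j) then 1 else 0)"
      by (simp add: prod_ind)
    also have "(\<forall>j\<in>{1..n}. j \<le> k \<longrightarrow> odd (count P j)) \<longleftrightarrow> k \<le> tstat P"
      unfolding tstat_ge[OF P] using assms by auto
    finally show "(\<Prod>j\<in>{1..n}. wk k j (count P j)) = (if k \<le> tstat P then 1 else 0)" .
  qed
  also have "\<dots> = int (card {P \<in> partitions n. k \<le> tstat P})"
    by (simp add: sum.If_cases finite_partitions Int_def conj_commute)
  finally show ?thesis .
qed

lemma lhs_eq: "int (\<Sum>P\<in>partitions n. tstat P) = (\<Sum>k\<in>{1..n}. int (card {P \<in> partitions n. k \<le> tstat P}))"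
proof -
  have "int (\<Sum>P\<in>partitions n. tstat P) = (\<Sum>P\<in>partitions n. \<Sum>k\<in>{1..n}. if k \<le> tstat P then 1 else 0)"
  proof -
    have "int (tstat P) = (\<Sum>k\<in>{1..n}. if k \<le> tstat P then 1 else 0)" if P: "P \<in> partitions n" for P
    proof -
      have "(\<Sum>k\<in>{1..n}. if k \<le> tstat P then 1 else 0 :: int) = int (card {k\<in>{1..n}. k \<le> tstat P})"
        by (simp add: sum.If_cases Int_def)
      also have "{k\<in>{1..n}. k \<le> tstat P} = {1..tstat P}" using tstat_le[OF P] by auto
      finally show ?thesis by simp
    qed
    then show ?thesis by simp
  qed
  also have "\<dots> = (\<Sum>k\<in>{1..n}. \<Sum>P\<in>partitions n. if k \<le> tstat P then 1 else 0)"
    by (rule sum.swap)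
  also have "\<dots> = (\<Sum>k\<in>{1..n}. int (card {P \<in> partitions n. k \<le> tstat P}))"
    by (rule sum.cong[OF refl]) (simp add: sum.If_cases finite_partitions Int_def conj_commute)
  finally show ?thesis .
qed


lemma distinct_mset_eq: "\<forall>x. count P x \<le> 1 \<Longrightarrow> mset_set (set_mset P) = P"
proof (rule multiset_eqI)
  fix x assume "\<forall>x. count P x \<le> 1"
  then have "count P x \<le> 1" by blast
  then show "count (mset_set (set_mset P)) x = count P x"
    by (cases "count P x") (auto simp: count_mset_set' not_in_iff)
qed

lemma sum_mset_set: "finite A \<Longrightarrow> sum_mset (mset_set A) = \<Sum>A" for A :: "nat set"
  by (simp add: sum_unfold_sum_mset)

lemma S_eq:
  assumes i: "1 \<le> i" "i \<le> n"
  shows "S i = (\<Sum>k\<in>{1..n}. Dk k i)"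
proof -
  define dp where "dp = distinct_partitions i"
  define DA where "DA = {A. finite A \<and> 0 \<notin> A \<and> \<Sum>A = i}"
  have fdp: "finite dp" unfolding dp_def distinct_partitions_def using finite_partitions by simp
  have meq: "P \<in> dp \<Longrightarrow> mset_set (set_mset P) = P" for P
    unfolding dp_def distinct_partitions_def by (auto intro: distinct_mset_eq)
  have "S i = (\<Sum>P\<in>dp. if even (prank P) then 1 else -1)"
    unfolding S_def dp_def by (simp add: sum.If_cases fdp[unfolded dp_def] Int_def conj_commute)
  also have "\<dots> = (\<Sum>P\<in>dp. sg (set_mset P))"
  proof (rule sum.cong[OF refl])
    fix P assume P: "P \<in> dp"
    have ne: "set_mset P \<noteq> {}" using P i unfolding dp_def distinct_partitions_def partitions_def by auto
    have "size P = card (set_mset P)" using meq[OF P] size_mset_set by metis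
    then have "even (prank P) \<longleftrightarrow> even (Max (set_mset P) + card (set_mset P))"
      unfolding prank_def by simp
    then show "(if even (prank P) then 1 else -1) = sg (set_mset P)"
      using ne by (simp add: sg_def)
  qed
  also have "\<dots> = (\<Sum>A\<in>set_mset ` dp. sg A)"
    by (rule sum.reindex[symmetric, unfolded comp_def]) (metis inj_onI meq)
  also have "set_mset ` dp = DA"
  proof
    show "set_mset ` dp \<subseteq> DA"
    proof
      fix A assume "A \<in> set_mset ` dp"
      then obtain P where P: "P \<in> dp" and A: "A = set_mset P" by auto
      have "\<Sum>A = sum_mset P" using meq[OF P] A sum_mset_set by (metis finite_set_mset)
      then show "A \<in> DA" using P A unfolding DA_def dp_def distinct_partitions_def partitions_def by auto
    qed
  next
    show "DA \<subseteq> set_mset ` dp"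
    proof
      fix A assume A: "A \<in> DA"
      have "mset_set A \<in> dp" using A unfolding DA_def dp_def distinct_partitions_def partitions_def
        by (auto simp: sum_mset_set count_mset_set') (metis gr0I)
      moreover have "A = set_mset (mset_set A)" using A unfolding DA_def by simp
      ultimately show "A \<in> set_mset ` dp" by blast
    qed
  qed
  also have "(\<Sum>A\<in>DA. sg A) = (\<Sum>k\<in>{1..n}. \<Sum>A\<in>{A\<in>DA. card A = k}. sg A)"
  proof (rule sum.group[symmetric])
    show "finite DA" unfolding DA_def
      by (rule finite_subset[of _ "Pow {..i}"]) (auto dest: elem_le_sum)
    show "card ` DA \<subseteq> {1..n}"
    proof
      fix k assume "k \<in> card ` DA"
      then obtain A where A: "A \<in> DA" "k = card A" by auto
      have "A \<noteq> {}" using A i unfolding DA_def by auto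
      then have "card A \<ge> 1" using A unfolding DA_def by (simp add: Suc_le_eq card_gt_0_iff)
      moreover have "card A \<le> i" using A card_le_sum unfolding DA_def by auto
      ultimately show "k \<in> {1..n}" using A i by auto
    qed
  qed simp
  also have "\<dots> = (\<Sum>k\<in>{1..n}. Dk k i)"
    unfolding Dk_def DA_def DS_def by (rule sum.cong[OF refl]) (rule sum.cong, auto)
  finally show ?thesis .
qed

theorem theorem6:
  fixes n :: nat
  assumes "n \<ge> 1"
  shows "int (\<Sum>P\<in>partitions n. tstat P) = (\<Sum>i\<in>{1..n}. S i * npart (int n - int i))"
proof -
  have "(\<Sum>i\<in>{1..n}. S i * npart (int n - int i))
      = (\<Sum>i\<in>{1..n}. \<Sum>k\<in>{1..n}. Dk k i * int (card (partitions (n - i))))"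
  proof (rule sum.cong[OF refl])
    fix i assume i: "i \<in> {1..n}"
    then have "nat (int n - int i) = n - i" "\<not> int n - int i < 0" by auto
    then show "S i * npart (int n - int i) = (\<Sum>k\<in>{1..n}. Dk k i * int (card (partitions (n - i))))"
      using S_eq[of i n] i by (simp add: npart_def sum_distrib_right)
  qed
  also have "\<dots> = (\<Sum>k\<in>{1..n}. \<Sum>i\<in>{1..n}. Dk k i * int (card (partitions (n - i))))"
    by (rule sum.swap)
  also have "\<dots> = (\<Sum>k\<in>{1..n}. (Df k * Pf n) $ n)"
  proof (rule sum.cong[OF refl])
    fix k assume k: "k \<in> {1..n}"
    have "(Df k * Pf n) $ n = (\<Sum>i=0..n. Dk k i * Pf n $ (n - i))"
      by (simp add: fps_mult_nth Df_def)
    also have "\<dots> = (\<Sum>i\<in>{1..n}. Dk k i * Pf n $ (n - i))"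
      using k by (simp add: sum.atLeast_Suc_atMost Dk_def DS_small)
    also have "\<dots> = (\<Sum>i\<in>{1..n}. Dk k i * int (card (partitions (n - i))))"
      by (rule sum.cong[OF refl]) (simp add: Pf_nth)
    finally show "(\<Sum>i\<in>{1..n}. Dk k i * int (card (partitions (n - i)))) = (Df k * Pf n) $ n" ..
  qed
  also have "\<dots> = (\<Sum>k\<in>{1..n}. Om n k $ n)"
    by (rule sum.cong[OF refl]) (simp add: D_Pf[of Df, OF Df_0 Df_step])
  also have "\<dots> = (\<Sum>k\<in>{1..n}. int (card {P \<in> partitions n. k \<le> tstat P}))"
    by (rule sum.cong[OF refl]) (simp add: Om_nth)
  also have "\<dots> = int (\<Sum>P\<in>partitions n. tstat P)"
    by (rule lhs_eq[symmetric])
  finally show ?thesis ..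
qed

end
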